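(* Let $n\ge1$, let $E$ be a CM field with maximal totally real subfield $E_0$, $d=[E_0:\mathbb{Q}]$, and let $\sigma_1,\dots,\sigma_d$ be the real embeddings of $E_0$. Let $p_1=n$ and let $p_2,\dots,p_d$ be integers with $0<p_i<n$ and $p_i\equiv n\pmod 2$, indexed so that $p_1\ge p_2\ge\cdots\ge p_d$; set $q_i=2n-p_i$. Choose $\delta_1,\dots,\delta_d\in E_0$ with $\sigma_i(\delta_i)>0$ and $\sigma_i(\delta_j)<0$ for $i\ne j$. Let $U$ be a $2n$-dimensional $E$-vector space with the $E/E_0$-Hermitian form $h$ which in some basis is diagonal with entries: $q_1$ entries $-1$, then for each $1\le i\le d-1$, $(q_{i+1}-q_i)$ entries equal to $(-1)^{i-1}\delta_1\delta_2\cdots\delta_i$, then $p_d$ entries $1$. Let $G=\mathrm{SU}(U,h)$, an algebraic group over $E_0$ acting on $U$ by the standard representation. Then the $G$-representation $\bigwedge^n_E U$ is defined over $E_0$: there exists a $G$-subrepresentation on an $E_0$-vector space $W_0\subseteq\mathrm{Res}_{E/E_0}\big(\bigwedge^n_E U\big)$ such that $W_0\otimes_{E_0}E\cong\bigwedge^n_E U$ as $G$-representations.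
   Context: $\mathrm{Res}_{E/E_0}$ of an $E$-vector space means the same space regarded as an $E_0$-vector space. By construction $h\otimes_{E_0,\sigma_i}\mathbb{R}$ has signature $(p_i,q_i)$. *)

theory Defs
  imports Complex_Main "Jordan_Normal_Form.Determinant" "Jordan_Normal_Form.DL_Submatrix"
begin

(* Number fields are modelled as subfields of the complex numbers. *)

definition subfield_C :: "complex set \<Rightarrow> bool" where
  "subfield_C F \<longleftrightarrow> 0 \<in> F \<and> 1 \<in> F \<and>
     (\<forall>x\<in>F. \<forall>y\<in>F. x + y \<in> F \<and> x - y \<in> F \<and> x * y \<in> F) \<and>
     (\<forall>x\<in>F. x \<noteq> 0 \<longrightarrow> inverse x \<in> F)"

definition span_over :: "complex set \<Rightarrow> complex set \<Rightarrow> complex set" where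
  "span_over K B = {v. \<exists>c. (\<forall>b\<in>B. c b \<in> K) \<and> v = (\<Sum>b\<in>B. c b * b)}"

definition indep_over :: "complex set \<Rightarrow> complex set \<Rightarrow> bool" where
  "indep_over K B \<longleftrightarrow> (\<forall>c. (\<forall>b\<in>B. c b \<in> K) \<and> (\<Sum>b\<in>B. c b * b) = 0 \<longrightarrow> (\<forall>b\<in>B. c b = 0))"

definition ext_degree :: "complex set \<Rightarrow> complex set \<Rightarrow> nat \<Rightarrow> bool" where
  "ext_degree K V d \<longleftrightarrow> (\<exists>B. finite B \<and> B \<subseteq> V \<and> card B = d \<and>
       V = span_over K B \<and> indep_over K B)"

definition number_field :: "complex set \<Rightarrow> bool" where
  "number_field F \<longleftrightarrow> subfield_C F \<and> (\<exists>d. ext_degree \<rat> F d)"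

definition embeddings :: "complex set \<Rightarrow> (complex \<Rightarrow> complex) set" where
  "embeddings F = {\<sigma>. \<sigma> 1 = 1 \<and> (\<forall>x\<in>F. \<forall>y\<in>F. \<sigma> (x + y) = \<sigma> x + \<sigma> y \<and> \<sigma> (x * y) = \<sigma> x * \<sigma> y)
                        \<and> (\<forall>x. x \<notin> F \<longrightarrow> \<sigma> x = 0)}"

definition real_embeddings :: "complex set \<Rightarrow> (complex \<Rightarrow> complex) set" where
  "real_embeddings F = {\<sigma>\<in>embeddings F. \<forall>x\<in>F. \<sigma> x \<in> \<real>}"

definition totally_real :: "complex set \<Rightarrow> bool" where
  "totally_real F \<longleftrightarrow> number_field F \<and> embeddings F = real_embeddings F"

definition totally_imaginary :: "complex set \<Rightarrow> bool" where
  "totally_imaginary F \<longleftrightarrow> number_field F \<and> real_embeddings F = {}"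

definition CM_field :: "complex set \<Rightarrow> bool" where
  "CM_field E \<longleftrightarrow> number_field E \<and> totally_imaginary E \<and>
     (\<exists>F. subfield_C F \<and> F \<subseteq> E \<and> totally_real F \<and> ext_degree F E 2)"

definition max_totally_real_subfield :: "complex set \<Rightarrow> complex set \<Rightarrow> bool" where
  "max_totally_real_subfield E E0 \<longleftrightarrow> subfield_C E0 \<and> E0 \<subseteq> E \<and> totally_real E0 \<and>
     (\<forall>F. subfield_C F \<and> F \<subseteq> E \<and> totally_real F \<longrightarrow> F \<subseteq> E0)"

(* Diagonal entries of the Hermitian form h (0-based index k < 2n):
   q_1 entries -1, then (q_{i+1}-q_i) entries (-1)^(i-1) \<delta>_1...\<delta>_i (1 \<le> i \<le> d-1),
   then p_d entries 1.  Since q is nondecreasing, the block of index k is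
   i = #{j \<in> {1..d}. q_j \<le> k}. *)
definition herm_entry :: "nat \<Rightarrow> (nat \<Rightarrow> nat) \<Rightarrow> (nat \<Rightarrow> complex) \<Rightarrow> nat \<Rightarrow> complex" where
  "herm_entry d q \<delta> k =
     (let i = card {j\<in>{1..d}. q j \<le> k} in
      if i = 0 then -1 else if i \<ge> d then 1 else (-1) ^ (i - 1) * (\<Prod>j=1..i. \<delta> j))"

definition herm_matrix :: "nat \<Rightarrow> nat \<Rightarrow> (nat \<Rightarrow> nat) \<Rightarrow> (nat \<Rightarrow> complex) \<Rightarrow> complex mat" where
  "herm_matrix n d q \<delta> = mat (2*n) (2*n) (\<lambda>(i,j). if i = j then herm_entry d q \<delta> i else 0)"

definition conj_transpose :: "complex mat \<Rightarrow> complex mat" where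
  "conj_transpose g = map_mat cnj (transpose_mat g)"

(* E0-points of SU(U,h), U = E^{2n} with h(x,y) = x^* H y; the involution of E/E0 is
   complex conjugation (E is CM, embedded in \<complex>). *)
definition SU_points :: "complex set \<Rightarrow> nat \<Rightarrow> complex mat \<Rightarrow> complex mat set" where
  "SU_points E m H = {g. g \<in> carrier_mat m m \<and> (\<forall>i<m. \<forall>j<m. g $$ (i,j) \<in> E) \<and>
      det g = 1 \<and> conj_transpose g * H * g = H}"

(* \<Lambda>^n_E (E^{2n}): coordinates indexed by n-subsets of {0..<2n} *)
definition wedge_index :: "nat \<Rightarrow> nat \<Rightarrow> nat set set" where
  "wedge_index m k = {I. I \<subseteq> {..<m} \<and> card I = k}"

definition wedge_space :: "complex set \<Rightarrow> nat \<Rightarrow> nat \<Rightarrow> (nat set \<Rightarrow> complex) set" where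
  "wedge_space E m k = {v. (\<forall>I. v I \<in> E) \<and> (\<forall>I. I \<notin> wedge_index m k \<longrightarrow> v I = 0)}"

definition wedge_act :: "nat \<Rightarrow> nat \<Rightarrow> complex mat \<Rightarrow> (nat set \<Rightarrow> complex) \<Rightarrow> (nat set \<Rightarrow> complex)" where
  "wedge_act m k g v = (\<lambda>I. if I \<in> wedge_index m k
       then (\<Sum>J\<in>wedge_index m k. det (submatrix g I J) * v J) else 0)"

definition vspan_over :: "complex set \<Rightarrow> (nat set \<Rightarrow> complex) set \<Rightarrow> (nat set \<Rightarrow> complex) set" where
  "vspan_over K B = {v. \<exists>c. (\<forall>b\<in>B. c b \<in> K) \<and> v = (\<lambda>I. \<Sum>b\<in>B. c b * b I)}"

definition vindep_over :: "complex set \<Rightarrow> (nat set \<Rightarrow> complex) set \<Rightarrow> bool" where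
  "vindep_over K B \<longleftrightarrow> (\<forall>c. (\<forall>b\<in>B. c b \<in> K) \<and> (\<lambda>I. \<Sum>b\<in>B. c b * b I) = (\<lambda>I. 0)
      \<longrightarrow> (\<forall>b\<in>B. c b = 0))"

end

theory Submission
  imports Defs
begin


lemma mult_entry:
  assumes "A \<in> carrier_mat n n" "B \<in> carrier_mat n n" "i < n" "j < n"
  shows "(A * B) $$ (i,j) = (\<Sum>k<n. A $$ (i,k) * B $$ (k,j))"
  using assms by (simp add: scalar_prod_def lessThan_atLeast0 mult.commute)

lemma block_jacobi:
  fixes M N :: "'a::field mat"
  assumes M: "M \<in> carrier_mat (n+m) (n+m)" and N: "N \<in> carrier_mat (n+m) (n+m)"
    and MN: "M * N = 1\<^sub>m (n+m)"
  shows "det (mat n n (\<lambda>(i,j). M$$(i,j))) = det M * det (mat m m (\<lambda>(i,j). N$$(n+i,n+j)))"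
proof -
  define T where "T = four_block_mat (1\<^sub>m n) (mat n m (\<lambda>(i,j). N$$(i,n+j))) (0\<^sub>m m n) (mat m m (\<lambda>(i,j). N$$(n+i,n+j)))"
  have Tc: "T \<in> carrier_mat (n+m) (n+m)" unfolding T_def by auto
  have dT: "det T = det (mat m m (\<lambda>(i,j). N$$(n+i,n+j)))"
    unfolding T_def by (subst det_four_block_mat_lower_left_zero) auto
  have MT: "M * T = four_block_mat (mat n n (\<lambda>(i,j). M$$(i,j))) (0\<^sub>m n m) (mat m n (\<lambda>(i,j). M$$(n+i,j))) (1\<^sub>m m)"
  proof (rule eq_matI)
    fix i j assume i: "i < dim_row (four_block_mat (mat n n (\<lambda>(i,j). M$$(i,j))) (0\<^sub>m n m) (mat m n (\<lambda>(i,j). M$$(n+i,j))) (1\<^sub>m m))"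
      and j: "j < dim_col (four_block_mat (mat n n (\<lambda>(i,j). M$$(i,j))) (0\<^sub>m n m) (mat m n (\<lambda>(i,j). M$$(n+i,j))) (1\<^sub>m m))"
    have i': "i < n+m" and j': "j < n+m" using i j by auto
    have e: "(M * T) $$ (i,j) = (\<Sum>k<n+m. M $$ (i,k) * T $$ (k,j))"
      by (rule mult_entry[OF M Tc i' j'])
    show "(M * T) $$ (i,j) = four_block_mat (mat n n (\<lambda>(i,j). M$$(i,j))) (0\<^sub>m n m) (mat m n (\<lambda>(i,j). M$$(n+i,j))) (1\<^sub>m m) $$ (i,j)"
    proof (cases "j < n")
      case True
      have "(\<Sum>k<n+m. M $$ (i,k) * T $$ (k,j)) = (\<Sum>k<n+m. if k = j then M $$ (i,k) else 0)"
        by (rule sum.cong) (use True in \<open>auto simp: T_def\<close>)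
      also have "\<dots> = M $$ (i,j)" using True by simp
      finally show ?thesis using e True i' by auto
    next
      case False
      have "(\<Sum>k<n+m. M $$ (i,k) * T $$ (k,j)) = (\<Sum>k<n+m. M $$ (i,k) * N $$ (k,j))"
        by (rule sum.cong) (use False j' in \<open>auto simp: T_def\<close>)
      also have "\<dots> = (M * N) $$ (i,j)" by (rule mult_entry[OF M N i' j', symmetric])
      also have "\<dots> = (if i = j then 1 else 0)" using MN i' j' by simp
      finally show ?thesis using e False i' j' by auto
    qed
  qed (use M Tc in auto)
  have "det (M * T) = det (mat n n (\<lambda>(i,j). M$$(i,j)))"
    unfolding MT by (subst det_four_block_mat_upper_right_zero) auto
  moreover have "det (M * T) = det M * det T" by (rule det_mult[OF M Tc])
  ultimately show ?thesis using dT by simp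
qed


definition cmpl :: "nat \<Rightarrow> nat set \<Rightarrow> nat set" where
  "cmpl m I = {..<m} - I"

definition perm_of :: "nat \<Rightarrow> nat \<Rightarrow> nat set \<Rightarrow> nat \<Rightarrow> nat" where
  "perm_of m k I x = (if x < k then pick I x else if x < m then pick (cmpl m I) (x - k) else x)"

lemma card_cmpl: "I \<subseteq> {..<m} \<Longrightarrow> card (cmpl m I) = m - card I"
  unfolding cmpl_def by (simp add: card_Diff_subset finite_subset)

lemma perm_of_permutes:
  assumes I: "I \<subseteq> {..<m}" "card I = k" "k \<le> m"
  shows "perm_of m k I permutes {0..<m}"
proof -
  let ?p = "perm_of m k I"
  have cc: "card (cmpl m I) = m - k" using card_cmpl[OF I(1)] I(2) by simp
  have inI: "x < k \<Longrightarrow> ?p x \<in> I" for x using pick_in_set[of x I] I by (simp add: perm_of_def)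
  have inC: "k \<le> x \<Longrightarrow> x < m \<Longrightarrow> ?p x \<in> cmpl m I" for x
  proof -
    assume "k \<le> x" "x < m"
    then have "x - k < card (cmpl m I)" using cc by linarith
    then show ?thesis using pick_in_set[of "x-k" "cmpl m I"] \<open>k \<le> x\<close> \<open>x < m\<close> by (simp add: perm_of_def)
  qed
  have sub: "?p ` {0..<m} \<subseteq> {0..<m}"
  proof
    fix y assume "y \<in> ?p ` {0..<m}"
    then obtain x where x: "x < m" "y = ?p x" by auto
    show "y \<in> {0..<m}"
    proof (cases "x < k")
      case True then show ?thesis using inI[OF True] x I(1) by auto
    next
      case False then show ?thesis using inC[of x] x by (auto simp: cmpl_def)
    qed
  qed
  have inj: "inj_on ?p {0..<m}"
  proof (rule inj_onI)
    fix x y assume x: "x \<in> {0..<m}" and y: "y \<in> {0..<m}" and e: "?p x = ?p y"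
    show "x = y"
    proof (cases "x < k"; cases "y < k")
      assume "x < k" "y < k"
      then show ?thesis using e pick_mono[of _ I] I(2)
        by (simp add: perm_of_def) (metis linorder_neqE_nat less_irrefl)
    next
      assume a: "x < k" "\<not> y < k"
      then show ?thesis using e inI[of x] inC[of y] y by (auto simp: cmpl_def)
    next
      assume a: "\<not> x < k" "y < k"
      then show ?thesis using e inI[of y] inC[of x] x by (auto simp: cmpl_def)
    next
      assume a: "\<not> x < k" "\<not> y < k"
      have "x - k < card (cmpl m I)" "y - k < card (cmpl m I)" using a x y cc by auto
      then have "x - k = y - k" using e a x y pick_mono[of _ "cmpl m I"]
        by (simp add: perm_of_def) (metis linorder_neqE_nat less_irrefl)
      then show ?thesis using a by simp
    qed
  qed
  have "?p ` {0..<m} = {0..<m}" by (rule endo_inj_surj[OF _ sub inj]) simp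
  then have "bij_betw ?p {0..<m} {0..<m}" using inj by (simp add: bij_betw_def)
  then show ?thesis by (rule bij_imp_permutes) (use I(3) in \<open>simp add: perm_of_def\<close>)
qed

lemma det_permute_both:
  fixes A :: "'a::comm_ring_1 mat"
  assumes A: "A \<in> carrier_mat m m" and p: "p permutes {0..<m}" and q: "q permutes {0..<m}"
  shows "det (mat m m (\<lambda>(i,j). A $$ (p i, q j))) = signof p * signof q * det A"
proof -
  have pi: "p i < m" if "i < m" for i using permutes_in_image[OF p] that by auto
  have qi: "q i < m" if "i < m" for i using permutes_in_image[OF q] that by auto
  let ?B = "mat m m (\<lambda>(i,j). A $$ (p i, j))"
  have B: "?B \<in> carrier_mat m m" by simp
  have "mat m m (\<lambda>(i,j). A $$ (p i, q j)) = transpose_mat (mat m m (\<lambda>(i,j). (transpose_mat ?B) $$ (q i, j)))"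
    by (rule eq_matI) (auto simp: qi)
  then have "det (mat m m (\<lambda>(i,j). A $$ (p i, q j))) = det (mat m m (\<lambda>(i,j). (transpose_mat ?B) $$ (q i, j)))"
    by (metis det_transpose carrier_matI dim_row_mat dim_col_mat)
  also have "\<dots> = signof q * det (transpose_mat ?B)" by (rule det_permute_rows[OF _ q]) simp
  also have "\<dots> = signof q * det ?B" by (simp add: det_transpose[OF B])
  also have "det ?B = signof p * det A" by (rule det_permute_rows[OF A p])
  finally show ?thesis by simp
qed

lemma jacobi_sub:
  fixes A K :: "'a::field mat"
  assumes A: "A \<in> carrier_mat (k+l) (k+l)" and K: "K \<in> carrier_mat (k+l) (k+l)"
    and AK: "A * K = 1\<^sub>m (k+l)"
    and I: "I \<subseteq> {..<k+l}" "card I = k" and J: "J \<subseteq> {..<k+l}" "card J = k"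
  shows "det (submatrix A I J) = signof (perm_of (k+l) k I) * signof (perm_of (k+l) k J) * det A
           * det (submatrix K (cmpl (k+l) J) (cmpl (k+l) I))"
proof -
  let ?m = "k+l"
  let ?pI = "perm_of ?m k I" and ?pJ = "perm_of ?m k J"
  have pI: "?pI permutes {0..<?m}" by (rule perm_of_permutes) (use I in auto)
  have pJ: "?pJ permutes {0..<?m}" by (rule perm_of_permutes) (use J in auto)
  have pIi: "?pI i < ?m" if "i < ?m" for i using permutes_in_image[OF pI] that by auto
  have pJi: "?pJ i < ?m" if "i < ?m" for i using permutes_in_image[OF pJ] that by auto
  define A' where "A' = mat ?m ?m (\<lambda>(i,j). A $$ (?pI i, ?pJ j))"
  define K' where "K' = mat ?m ?m (\<lambda>(i,j). K $$ (?pJ i, ?pI j))"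
  have A'c: "A' \<in> carrier_mat ?m ?m" and K'c: "K' \<in> carrier_mat ?m ?m" by (auto simp: A'_def K'_def)
  have AK': "A' * K' = 1\<^sub>m ?m"
  proof (rule eq_matI)
    fix i j assume "i < dim_row (1\<^sub>m ?m)" "j < dim_col (1\<^sub>m ?m)"
    then have i: "i < ?m" and j: "j < ?m" by auto
    have "(A' * K') $$ (i,j) = (\<Sum>r<?m. A' $$ (i,r) * K' $$ (r,j))" by (rule mult_entry[OF A'c K'c i j])
    also have "\<dots> = (\<Sum>r<?m. A $$ (?pI i, ?pJ r) * K $$ (?pJ r, ?pI j))"
      by (rule sum.cong) (auto simp: A'_def K'_def i j)
    also have "\<dots> = (\<Sum>s<?m. A $$ (?pI i, s) * K $$ (s, ?pI j))"
      using sum.reindex_bij_betw[OF permutes_imp_bij[OF pJ], of "\<lambda>s. A $$ (?pI i, s) * K $$ (s, ?pI j)"]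
      by (simp add: lessThan_atLeast0)
    also have "\<dots> = (A * K) $$ (?pI i, ?pI j)" by (rule mult_entry[OF A K pIi[OF i] pIi[OF j], symmetric])
    also have "\<dots> = (if ?pI i = ?pI j then 1 else 0)" using AK pIi[OF i] pIi[OF j] by simp
    also have "\<dots> = (if i = j then 1 else 0)"
      using permutes_inj[OF pI] by (metis injD)
    finally show "(A' * K') $$ (i,j) = 1\<^sub>m ?m $$ (i,j)" using i j by simp
  qed (auto simp: A'_def K'_def)
  have bj: "det (mat k k (\<lambda>(i,j). A'$$(i,j))) = det A' * det (mat l l (\<lambda>(i,j). K'$$(k+i,k+j)))"
    by (rule block_jacobi[OF A'c K'c AK'])
  have cI: "card {i. i < ?m \<and> i \<in> I} = k" using I by (metis (no_types, lifting) Collect_cong lessThan_iff subset_eq Collect_mem_eq)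
  have cJ: "card {i. i < ?m \<and> i \<in> J} = k" using J by (metis (no_types, lifting) Collect_cong lessThan_iff subset_eq Collect_mem_eq)
  have s1: "submatrix A I J = mat k k (\<lambda>(i,j). A'$$(i,j))"
    unfolding submatrix_def using A cI cJ
    by (intro eq_matI) (auto simp: A'_def perm_of_def)
  have ccI: "card {i. i < ?m \<and> i \<in> cmpl ?m I} = l"
  proof -
    have "{i. i < ?m \<and> i \<in> cmpl ?m I} = cmpl ?m I" by (auto simp: cmpl_def)
    then show ?thesis using card_cmpl[OF I(1)] I(2) by simp
  qed
  have ccJ: "card {i. i < ?m \<and> i \<in> cmpl ?m J} = l"
  proof -
    have "{i. i < ?m \<and> i \<in> cmpl ?m J} = cmpl ?m J" by (auto simp: cmpl_def)
    then show ?thesis using card_cmpl[OF J(1)] J(2) by simp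
  qed
  have s2: "submatrix K (cmpl ?m J) (cmpl ?m I) = mat l l (\<lambda>(i,j). K'$$(k+i,k+j))"
    unfolding submatrix_def using K ccI ccJ
    by (intro eq_matI) (auto simp: K'_def perm_of_def)
  have dA': "det A' = signof ?pI * signof ?pJ * det A"
    unfolding A'_def by (rule det_permute_both[OF A pI pJ])
  show ?thesis using bj s1 s2 dA' by simp
qed


lemma pick_bij:
  assumes "finite S" "card S = n"
  shows "bij_betw (pick S) {..<n} S"
proof -
  have inj: "inj_on (pick S) {..<n}"
    by (rule inj_onI) (metis assms(2) lessThan_iff linorder_neqE_nat pick_mono less_irrefl)
  have sub: "pick S ` {..<n} \<subseteq> S" using pick_in_set assms by auto
  have "card (pick S ` {..<n}) = card S" using card_image[OF inj] assms by simp
  then have "pick S ` {..<n} = S" using card_subset_eq[OF assms(1) sub] by simp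
  then show ?thesis using inj by (simp add: bij_betw_def)
qed

lemma prod_pick:
  assumes "finite S" "card S = n"
  shows "(\<Prod>i<n. f (pick S i)) = (\<Prod>s\<in>S. f s)"
  using prod.reindex_bij_betw[OF pick_bij[OF assms]] by simp

lemma det_scaled_cnj_transpose:
  assumes B: "B \<in> carrier_mat n n"
  shows "det (mat n n (\<lambda>(i,j). x i * cnj (B$$(j,i)) * y j)) = (\<Prod>i<n. x i) * (\<Prod>i<n. y i) * cnj (det B)"
proof -
  have Bt: "transpose_mat B \<in> carrier_mat n n" using B by simp
  have "det (mat n n (\<lambda>(i,j). x i * cnj (B$$(j,i)) * y j))
     = (\<Sum>p\<in>{p. p permutes {0..<n}}. signof p * (\<Prod>i=0..<n. x i * cnj (B$$(p i,i)) * y (p i)))"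
    by (subst det_def'[of _ n]) (auto intro!: sum.cong prod.cong simp: permutes_in_image)
  also have "\<dots> = (\<Sum>p\<in>{p. p permutes {0..<n}}. (\<Prod>i<n. x i) * (\<Prod>i<n. y i) * (signof p * (\<Prod>i=0..<n. cnj (B$$(p i,i)))))"
  proof (rule sum.cong)
    fix p assume "p \<in> {p. p permutes {0..<n}}"
    then have p: "p permutes {0..<n}" by simp
    have "(\<Prod>i=0..<n. y (p i)) = (\<Prod>i=0..<n. y i)"
      using prod.reindex_bij_betw[OF permutes_imp_bij[OF p], of y] by simp
    then show "signof p * (\<Prod>i=0..<n. x i * cnj (B$$(p i,i)) * y (p i)) = (\<Prod>i<n. x i) * (\<Prod>i<n. y i) * (signof p * (\<Prod>i=0..<n. cnj (B$$(p i,i))))"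
      by (simp add: prod.distrib lessThan_atLeast0)
  qed simp
  also have "\<dots> = (\<Prod>i<n. x i) * (\<Prod>i<n. y i) * (\<Sum>p\<in>{p. p permutes {0..<n}}. signof p * (\<Prod>i=0..<n. cnj (B$$(p i,i))))"
    by (simp add: sum_distrib_left)
  also have "(\<Sum>p\<in>{p. p permutes {0..<n}}. signof p * (\<Prod>i=0..<n. cnj (B$$(p i,i)))) = cnj (det (transpose_mat B))"
  proof -
    have "cnj (det (transpose_mat B)) = (\<Sum>p\<in>{p. p permutes {0..<n}}. cnj (signof p * (\<Prod>i=0..<n. transpose_mat B $$ (i, p i))))"
      by (subst det_def'[OF Bt]) (simp only: cnj_sum)
    also have "\<dots> = (\<Sum>p\<in>{p. p permutes {0..<n}}. signof p * (\<Prod>i=0..<n. cnj (B$$(p i,i))))"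
    proof (rule sum.cong[OF refl])
    fix p assume "p \<in> {p. p permutes {0..<n}}"
    then have p: "p permutes {0..<n}" by simp
    have "(\<Prod>i=0..<n. cnj (B$$(p i,i))) = cnj (\<Prod>i=0..<n. transpose_mat B $$ (i, p i))"
    proof -
      have "x < n \<Longrightarrow> B $$ (p x, x) = transpose_mat B $$ (x, p x)" for x
        using permutes_in_image[OF p, of x] B by auto
      then show ?thesis by (auto intro!: prod.cong)
    qed
    then show "cnj (signof p * (\<Prod>i=0..<n. transpose_mat B $$ (i, p i))) = signof p * (\<Prod>i=0..<n. cnj (B$$(p i,i)))"
      by simp
  qed
  finally show ?thesis by simp
  qed
  also have "det (transpose_mat B) = det B" by (rule det_transpose[OF B])
  finally show ?thesis .
qed

definition diagm :: "nat \<Rightarrow> (nat \<Rightarrow> complex) \<Rightarrow> complex mat" where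
  "diagm m a = mat m m (\<lambda>(i,j). if i = j then a i else 0)"

definition cc :: "nat \<Rightarrow> nat \<Rightarrow> (nat \<Rightarrow> complex) \<Rightarrow> nat set \<Rightarrow> complex" where
  "cc m k a I = signof (perm_of m k I) * (\<Prod>s\<in>cmpl m I. a s)"

lemma key_identity:
  fixes g :: "complex mat" and a :: "nat \<Rightarrow> complex"
  assumes g: "g \<in> carrier_mat (k+k) (k+k)" and dg: "det g = 1"
    and a: "\<And>s. s < k+k \<Longrightarrow> a s \<noteq> 0"
    and u: "conj_transpose g * diagm (k+k) a * g = diagm (k+k) a"
    and I: "I \<subseteq> {..<k+k}" "card I = k" and J: "J \<subseteq> {..<k+k}" "card J = k"
  shows "det (submatrix g I J) * cc (k+k) k a J = cc (k+k) k a I * cnj (det (submatrix g (cmpl (k+k) I) (cmpl (k+k) J)))"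
proof -
  let ?m = "k+k"
  define K where "K = mat ?m ?m (\<lambda>(r,s). cnj (g$$(s,r)) * a s / a r)"
  have Kc: "K \<in> carrier_mat ?m ?m" by (simp add: K_def)
  have Hc: "diagm ?m a \<in> carrier_mat ?m ?m" by (simp add: diagm_def)
  have Gc: "conj_transpose g \<in> carrier_mat ?m ?m" using g by (simp add: conj_transpose_def)
  have KG: "K * g = 1\<^sub>m ?m"
  proof (rule eq_matI)
    fix r s assume "r < dim_row (1\<^sub>m ?m)" "s < dim_col (1\<^sub>m ?m)"
    then have r: "r < ?m" and s: "s < ?m" by auto
    have "(conj_transpose g * diagm ?m a * g) $$ (r,s) = (\<Sum>t<?m. (conj_transpose g * diagm ?m a) $$ (r,t) * g $$ (t,s))"
      by (rule mult_entry[OF mult_carrier_mat[OF Gc Hc] g r s])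
    also have "\<dots> = (\<Sum>t<?m. cnj (g$$(t,r)) * a t * g $$ (t,s))"
    proof (rule sum.cong)
      fix t assume t: "t \<in> {..<?m}"
      have "(conj_transpose g * diagm ?m a) $$ (r,t) = (\<Sum>u<?m. conj_transpose g $$ (r,u) * diagm ?m a $$ (u,t))"
        by (rule mult_entry[OF Gc Hc r]) (use t in auto)
      also have "\<dots> = (\<Sum>u<?m. if u = t then cnj (g$$(t,r)) * a t else 0)"
        by (rule sum.cong) (use t r g in \<open>auto simp: conj_transpose_def diagm_def\<close>)
      also have "\<dots> = cnj (g$$(t,r)) * a t" using t by simp
      finally show "(conj_transpose g * diagm ?m a) $$ (r,t) * g $$ (t,s) = cnj (g$$(t,r)) * a t * g $$ (t,s)" by simp
    qed simp
    finally have e1: "(\<Sum>t<?m. cnj (g$$(t,r)) * a t * g $$ (t,s)) = (if r = s then a r else 0)"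
      using u r s by (simp add: diagm_def)
    have "(K * g) $$ (r,s) = (\<Sum>t<?m. K $$ (r,t) * g $$ (t,s))" by (rule mult_entry[OF Kc g r s])
    also have "\<dots> = (\<Sum>t<?m. cnj (g$$(t,r)) * a t * g $$ (t,s)) / a r"
      by (simp add: sum_divide_distrib K_def r)
    also have "\<dots> = (if r = s then 1 else 0)" using e1 a[OF r] a[OF s] by simp
    finally show "(K * g) $$ (r,s) = 1\<^sub>m ?m $$ (r,s)" using r s by simp
  qed (use g in \<open>auto simp: K_def\<close>)
  have GK: "g * K = 1\<^sub>m ?m" by (rule mat_mult_left_right_inverse[OF Kc g KG])
  have jac: "det (submatrix g I J) = signof (perm_of ?m k I) * signof (perm_of ?m k J) * det g
           * det (submatrix K (cmpl ?m J) (cmpl ?m I))"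
    by (rule jacobi_sub[OF g Kc GK I J])
  have cIc: "card (cmpl ?m I) = k" using card_cmpl[OF I(1)] I(2) by simp
  have cJc: "card (cmpl ?m J) = k" using card_cmpl[OF J(1)] J(2) by simp
  have fI: "finite (cmpl ?m I)" "finite (cmpl ?m J)" by (auto simp: cmpl_def)
  have ccI: "card {i. i < ?m \<and> i \<in> cmpl ?m I} = k"
  proof -
    have "{i. i < ?m \<and> i \<in> cmpl ?m I} = cmpl ?m I" by (auto simp: cmpl_def)
    then show ?thesis using cIc by simp
  qed
  have ccJ: "card {i. i < ?m \<and> i \<in> cmpl ?m J} = k"
  proof -
    have "{i. i < ?m \<and> i \<in> cmpl ?m J} = cmpl ?m J" by (auto simp: cmpl_def)
    then show ?thesis using cJc by simp
  qed
  let ?B = "submatrix g (cmpl ?m I) (cmpl ?m J)"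
  have Bc: "?B \<in> carrier_mat k k" using g ccI ccJ by (simp add: submatrix_def)
  have sK: "submatrix K (cmpl ?m J) (cmpl ?m I) =
      mat k k (\<lambda>(i,j). (1 / a (pick (cmpl ?m J) i)) * cnj (?B$$(j,i)) * a (pick (cmpl ?m I) j))"
  proof -
    have pk: "i < k \<Longrightarrow> pick (cmpl ?m J) i < ?m \<and> pick (cmpl ?m I) i < ?m" for i
      using pick_in_set[of i "cmpl ?m J"] pick_in_set[of i "cmpl ?m I"] cIc cJc by (auto simp: cmpl_def)
    show ?thesis unfolding submatrix_def using g ccI ccJ pk by (intro eq_matI) (auto simp: K_def)
  qed
  have dK: "det (submatrix K (cmpl ?m J) (cmpl ?m I)) =
      (\<Prod>s\<in>cmpl ?m J. 1 / a s) * (\<Prod>s\<in>cmpl ?m I. a s) * cnj (det ?B)"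
    unfolding sK det_scaled_cnj_transpose[OF Bc]
    using prod_pick[OF fI(1) cIc, of a] prod_pick[OF fI(2) cJc, of "\<lambda>s. 1 / a s"] by simp
  have nz: "(\<Prod>s\<in>cmpl ?m J. a s) \<noteq> 0"
    using a fI by (auto simp: cmpl_def)
  have sq: "signof (perm_of ?m k J) * signof (perm_of ?m k J) = (1::complex)"
    by (metis of_int_mult of_int_1 sign_idempotent)
  have "det (submatrix g I J) * cc ?m k a J =
     signof (perm_of ?m k I) * (signof (perm_of ?m k J) * signof (perm_of ?m k J)) *
       ((\<Prod>s\<in>cmpl ?m J. 1 / a s) * (\<Prod>s\<in>cmpl ?m J. a s)) * (\<Prod>s\<in>cmpl ?m I. a s) * cnj (det ?B)"
    unfolding jac dK dg cc_def by (simp add: algebra_simps)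
  also have "(\<Prod>s\<in>cmpl ?m J. 1 / a s) * (\<Prod>s\<in>cmpl ?m J. a s) = 1"
    using nz by (simp add: prod_dividef)
  finally show ?thesis unfolding cc_def using sq by simp
qed


definition rotj :: "nat \<Rightarrow> nat \<Rightarrow> nat \<Rightarrow> nat" where
  "rotj k j x = (if x < j then x + k else if k \<le> x \<and> x < k + j then x - k else x)"

lemma rotj_step: "j < k \<Longrightarrow> rotj k (Suc j) = rotj k j \<circ> Transposition.transpose j (j+k)"
  by (rule ext) (auto simp: rotj_def Transposition.transpose_def)

lemma rotj_sign: "j \<le> k \<Longrightarrow> permutation (rotj k j) \<and> sign (rotj k j) = (-1)^j"
proof (induction j)
  case 0
  have "rotj k 0 = id" by (rule ext) (simp add: rotj_def)
  then show ?case by simp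
next
  case (Suc j)
  then have IH: "permutation (rotj k j)" "sign (rotj k j) = (-1)^j" by auto
  have jk: "j < k" using Suc.prems by simp
  have "permutation (rotj k (Suc j))" unfolding rotj_step[OF jk]
    by (rule permutation_compose[OF IH(1) permutation_swap_id])
  moreover have "sign (rotj k (Suc j)) = (-1)^Suc j" unfolding rotj_step[OF jk]
    using sign_compose[OF IH(1) permutation_swap_id] IH(2) jk by (simp add: sign_swap_id)
  ultimately show ?case by simp
qed

lemma cmpl_cmpl: "I \<subseteq> {..<m} \<Longrightarrow> cmpl m (cmpl m I) = I"
  unfolding cmpl_def by auto

lemma perm_of_cmpl:
  assumes "I \<subseteq> {..<k+k}"
  shows "perm_of (k+k) k (cmpl (k+k) I) = perm_of (k+k) k I \<circ> rotj k k"
  by (rule ext) (auto simp: perm_of_def rotj_def cmpl_cmpl[OF assms])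

lemma cc_pair:
  assumes I: "I \<subseteq> {..<k+k}" "card I = k"
  shows "cc (k+k) k a I * cc (k+k) k a (cmpl (k+k) I) = (-1)^k * (\<Prod>s<k+k. a s)"
proof -
  have p: "permutation (perm_of (k+k) k I)"
    using perm_of_permutes[OF I(1) I(2)] permutes_imp_permutation by auto
  have r: "permutation (rotj k k)" "sign (rotj k k) = (-1)^k" using rotj_sign[of k k] by auto
  have s: "sign (perm_of (k+k) k (cmpl (k+k) I)) = sign (perm_of (k+k) k I) * (-1)^k"
    unfolding perm_of_cmpl[OF I(1)] sign_compose[OF p r(1)] r(2) ..
  have sq: "(signof (perm_of (k+k) k I) :: complex) * signof (perm_of (k+k) k I) = 1"
    by (metis of_int_mult of_int_1 sign_idempotent)
  have "(\<Prod>s\<in>cmpl (k+k) I. a s) * (\<Prod>s\<in>I. a s) = (\<Prod>s<k+k. a s)"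
  proof -
    have "{..<k+k} = cmpl (k+k) I \<union> I" "cmpl (k+k) I \<inter> I = {}" using I(1) by (auto simp: cmpl_def)
    then show ?thesis by (metis finite_lessThan finite_Un prod.union_disjoint)
  qed
  then show ?thesis unfolding cc_def cmpl_cmpl[OF I(1)] s
    using sq by (simp add: algebra_simps)
qed



lemma sf_0: "subfield_C F \<Longrightarrow> 0 \<in> F" and sf_1: "subfield_C F \<Longrightarrow> 1 \<in> F"
  by (auto simp: subfield_C_def)
lemma sf_add: "subfield_C F \<Longrightarrow> x \<in> F \<Longrightarrow> y \<in> F \<Longrightarrow> x + y \<in> F"
  and sf_diff: "subfield_C F \<Longrightarrow> x \<in> F \<Longrightarrow> y \<in> F \<Longrightarrow> x - y \<in> F"
  and sf_mult: "subfield_C F \<Longrightarrow> x \<in> F \<Longrightarrow> y \<in> F \<Longrightarrow> x * y \<in> F"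
  by (auto simp: subfield_C_def)
lemma sf_inverse: "subfield_C F \<Longrightarrow> x \<in> F \<Longrightarrow> inverse x \<in> F"
  by (cases "x = 0") (auto simp: subfield_C_def)
lemma sf_divide: "subfield_C F \<Longrightarrow> x \<in> F \<Longrightarrow> y \<in> F \<Longrightarrow> x / y \<in> F"
  by (simp add: divide_inverse sf_mult sf_inverse)
lemma sf_uminus: "subfield_C F \<Longrightarrow> x \<in> F \<Longrightarrow> - x \<in> F"
  using sf_diff[of F 0 x] sf_0[of F] by simp
lemma sf_sum: "subfield_C F \<Longrightarrow> (\<And>x. x \<in> S \<Longrightarrow> f x \<in> F) \<Longrightarrow> sum f S \<in> F"
  by (induction S rule: infinite_finite_induct) (auto intro: sf_0 sf_add)
lemma sf_prod: "subfield_C F \<Longrightarrow> (\<And>x. x \<in> S \<Longrightarrow> f x \<in> F) \<Longrightarrow> prod f S \<in> F"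
  by (induction S rule: infinite_finite_induct) (auto intro: sf_1 sf_mult)
lemma sf_signof: "subfield_C F \<Longrightarrow> (signof p :: complex) \<in> F"
  using sf_1[of F] sf_uminus[of F 1] by (cases p rule: sign_cases) auto
lemma sf_two: "subfield_C F \<Longrightarrow> 2 \<in> F"
  using sf_add[of F 1 1] sf_1[of F] by simp

lemma det_in_sf:
  assumes F: "subfield_C F" and A: "A \<in> carrier_mat n n" and e: "\<And>i j. i < n \<Longrightarrow> j < n \<Longrightarrow> A $$ (i,j) \<in> F"
  shows "det A \<in> F"
  unfolding det_def'[OF A]
  by (intro sf_sum[OF F] sf_mult[OF F] sf_signof[OF F] sf_prod[OF F])
     (auto intro!: e simp: permutes_in_image)


locale rs =
  fixes E E0 :: "complex set" and xi :: complex and k :: nat and a :: "nat \<Rightarrow> complex" and t :: complex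
  assumes sfE: "subfield_C E" and sfE0: "subfield_C E0" and E0E: "E0 \<subseteq> E" and E0R: "E0 \<subseteq> \<real>"
    and xiE: "xi \<in> E" and xire: "Re xi = 0" and xinz: "xi \<noteq> 0"
    and decomp: "\<And>x. x \<in> E \<Longrightarrow> \<exists>\<alpha>\<in>E0. \<exists>\<beta>\<in>E0. x = \<alpha> + \<beta> * xi"
    and k1: "k \<ge> 1"
    and aE0: "\<And>s. s < k+k \<Longrightarrow> a s \<in> E0" and anz: "\<And>s. s < k+k \<Longrightarrow> a s \<noteq> 0"
    and tE0: "t \<in> E0" and tnz: "t \<noteq> 0" and tsq: "(-1)^k * (\<Prod>s<k+k. a s) = t^2"
begin

abbreviation "m \<equiv> k+k"
abbreviation "WI \<equiv> wedge_index m k"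
definition "C I = cc m k a I / t"
definition "tau v = (\<lambda>I. if I \<in> WI then C I * cnj (v (cmpl m I)) else 0)"
definition "R = {I \<in> WI. 0 \<in> I}"
definition "bv = (\<lambda>(J, b). (\<lambda>I. if I = J then (if b then 1 else xi)
      else if I = cmpl m J then (if b then C (cmpl m J) else - xi * C (cmpl m J)) else 0))"
definition "B = bv ` (R \<times> UNIV)"
definition "vecof \<alpha> \<beta> = (\<lambda>I. if I \<in> R then \<alpha> I + \<beta> I * xi
      else if I \<in> WI \<and> cmpl m I \<in> R then C I * (\<alpha> (cmpl m I) - \<beta> (cmpl m I) * xi) else 0)"

lemma real_E0: "x \<in> E0 \<Longrightarrow> cnj x = x"
  using E0R by (metis Reals_cnj_iff subsetD)

lemma cnj_xi: "cnj xi = - xi"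
  using xire by (simp add: complex_eq_iff)

lemma cnj_E: "x \<in> E \<Longrightarrow> cnj x \<in> E"
proof -
  assume "x \<in> E"
  then obtain \<alpha> \<beta> where ab: "\<alpha> \<in> E0" "\<beta> \<in> E0" "x = \<alpha> + \<beta> * xi" using decomp by blast
  then have "cnj x = \<alpha> - \<beta> * xi" using real_E0 cnj_xi by simp
  then show ?thesis using ab E0E xiE by (auto intro!: sf_diff[OF sfE] sf_mult[OF sfE])
qed

lemma WI_sub: "I \<in> WI \<Longrightarrow> I \<subseteq> {..<m}" and WI_card: "I \<in> WI \<Longrightarrow> card I = k"
  by (auto simp: wedge_index_def)

lemma cmpl_WI: "I \<in> WI \<Longrightarrow> cmpl m I \<in> WI"
  unfolding wedge_index_def using card_cmpl[of I m] by (auto simp: cmpl_def)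

lemma cmpl_inv: "I \<in> WI \<Longrightarrow> cmpl m (cmpl m I) = I"
  using cmpl_cmpl WI_sub by blast

lemma C_E0: "C I \<in> E0"
  unfolding C_def cc_def
  by (intro sf_divide[OF sfE0] sf_mult[OF sfE0] sf_signof[OF sfE0] sf_prod[OF sfE0] tE0)
     (auto simp: cmpl_def intro: aE0)

lemma C_real: "cnj (C I) = C I" using C_E0 real_E0 by blast

lemma C_pair: "I \<in> WI \<Longrightarrow> C I * C (cmpl m I) = 1"
  unfolding C_def using cc_pair[OF WI_sub WI_card, of I a] tsq tnz
  by (simp add: power2_eq_square)

lemma C_nz: "I \<in> WI \<Longrightarrow> C I \<noteq> 0" using C_pair by fastforce

lemma R_cases: "I \<in> WI \<Longrightarrow> I \<in> R \<or> cmpl m I \<in> R"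
  unfolding R_def using cmpl_WI k1 by (auto simp: cmpl_def)

lemma R_not_both: "I \<in> R \<Longrightarrow> cmpl m I \<notin> R"
  unfolding R_def by (auto simp: cmpl_def)

lemma R_sub: "R \<subseteq> WI" unfolding R_def by auto

lemma finite_WI: "finite WI"
proof -
  have "WI \<subseteq> Pow {..<m}" by (auto simp: wedge_index_def)
  then show ?thesis by (rule finite_subset) simp
qed

lemma finite_R: "finite R" using finite_WI R_sub finite_subset by blast

lemma xi_not1: "xi \<noteq> 1" using xire by auto

lemma inj_bv: "inj_on bv (R \<times> UNIV)"
proof (rule inj_onI)
  fix x y assume x: "x \<in> R \<times> (UNIV::bool set)" and y: "y \<in> R \<times> (UNIV::bool set)" and e: "bv x = bv y"
  obtain J b where xJ: "x = (J,b)" "J \<in> R" using x by auto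
  obtain J' b' where yJ: "y = (J',b')" "J' \<in> R" using y by auto
  have "bv x J = bv y J" using e by simp
  then have "(if b then 1 else xi) = bv (J',b') J" using xJ yJ by (simp add: bv_def)
  moreover have "J \<noteq> cmpl m J'" using xJ(2) yJ(2) by (auto simp: R_def cmpl_def)
  ultimately have "(if b then 1 else xi) = (if J = J' then (if b' then 1 else xi) else 0)"
    by (simp add: bv_def)
  then show "x = y" using xJ yJ xinz xi_not1 by (auto split: if_splits)
qed

lemma sum_bool: "(\<Sum>x\<in>R \<times> (UNIV::bool set). f x) = (\<Sum>J\<in>R. f (J,True) + f (J,False))"
proof -
  have "(\<Sum>x\<in>R \<times> (UNIV::bool set). f x) = (\<Sum>J\<in>R. \<Sum>b\<in>(UNIV::bool set). f (J,b))"
    by (rule sum.cartesian_product')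
  also have "\<dots> = (\<Sum>J\<in>R. f (J,True) + f (J,False))"
    by (simp add: UNIV_bool add.commute)
  finally show ?thesis .
qed

lemma sum_B_eval: "(\<lambda>I. \<Sum>b\<in>B. c b * b I) = vecof (\<lambda>J. c (bv (J,True))) (\<lambda>J. c (bv (J,False)))"
proof (rule ext)
  fix I
  have "(\<Sum>b\<in>B. c b * b I) = (\<Sum>x\<in>R \<times> UNIV. c (bv x) * bv x I)"
    unfolding B_def by (rule sum.reindex[OF inj_bv, unfolded comp_def])
  also have "\<dots> = (\<Sum>J\<in>R. c (bv (J,True)) * bv (J,True) I + c (bv (J,False)) * bv (J,False) I)"
    by (rule sum_bool)
  also have "\<dots> = vecof (\<lambda>J. c (bv (J,True))) (\<lambda>J. c (bv (J,False))) I"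
  proof (cases "I \<in> R")
    case True
    have "(\<Sum>J\<in>R. c (bv (J,True)) * bv (J,True) I + c (bv (J,False)) * bv (J,False) I)
        = (\<Sum>J\<in>R. if J = I then c (bv (J,True)) + c (bv (J,False)) * xi else 0)"
    proof (rule sum.cong[OF refl])
      fix J assume J: "J \<in> R"
      have "I \<noteq> cmpl m J" using True J by (auto simp: R_def cmpl_def)
      then show "c (bv (J,True)) * bv (J,True) I + c (bv (J,False)) * bv (J,False) I =
          (if J = I then c (bv (J,True)) + c (bv (J,False)) * xi else 0)"
        by (auto simp: bv_def)
    qed
    also have "\<dots> = c (bv (I,True)) + c (bv (I,False)) * xi" using True finite_R by simp
    finally show ?thesis using True by (simp add: vecof_def)
  next
    case False
    show ?thesis
    proof (cases "I \<in> WI \<and> cmpl m I \<in> R")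
      case True
      have cI: "cmpl m (cmpl m I) = I" using True cmpl_inv by blast
      have "(\<Sum>J\<in>R. c (bv (J,True)) * bv (J,True) I + c (bv (J,False)) * bv (J,False) I)
        = (\<Sum>J\<in>R. if J = cmpl m I then C I * (c (bv (J,True)) - c (bv (J,False)) * xi) else 0)"
      proof (rule sum.cong[OF refl])
        fix J assume J: "J \<in> R"
        have JW: "J \<in> WI" using J R_sub by auto
        show "c (bv (J,True)) * bv (J,True) I + c (bv (J,False)) * bv (J,False) I =
          (if J = cmpl m I then C I * (c (bv (J,True)) - c (bv (J,False)) * xi) else 0)"
        proof (cases "J = cmpl m I")
          case True
          then have e: "cmpl m J = I" using cI by simp
          have "I \<noteq> J" using False J by auto
          then have "bv (J,True) I = C I" "bv (J,False) I = - xi * C I" using e by (auto simp: bv_def)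
          then show ?thesis using True by (simp add: algebra_simps)
        next
          case f2: False
          have "I \<noteq> cmpl m J" using f2 cmpl_inv[OF JW] by auto
          moreover have "I \<noteq> J" using False J by auto
          ultimately show ?thesis using f2 by (simp add: bv_def)
        qed
      qed
      also have "\<dots> = C I * (c (bv (cmpl m I,True)) - c (bv (cmpl m I,False)) * xi)" using True finite_R by simp
      finally show ?thesis using True False by (simp add: vecof_def)
    next
      case nc: False
      have "(\<Sum>J\<in>R. c (bv (J,True)) * bv (J,True) I + c (bv (J,False)) * bv (J,False) I) = 0"
      proof (rule sum.neutral, rule ballI)
        fix J assume J: "J \<in> R"
        have JW: "J \<in> WI" using J R_sub by auto
        have "I \<noteq> J" using J False by auto
        moreover have "I \<noteq> cmpl m J" using nc J cmpl_WI[OF JW] cmpl_inv[OF JW] by auto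
        ultimately show "c (bv (J,True)) * bv (J,True) I + c (bv (J,False)) * bv (J,False) I = 0"
          by (simp add: bv_def)
      qed
      then show ?thesis using False nc by (auto simp: vecof_def)
    qed
  qed
  finally show "(\<Sum>b\<in>B. c b * b I) = vecof (\<lambda>J. c (bv (J,True))) (\<lambda>J. c (bv (J,False))) I" .
qed


lemma vecof_cong: "(\<And>J. J \<in> R \<Longrightarrow> \<alpha> J = \<alpha>' J \<and> \<beta> J = \<beta>' J) \<Longrightarrow> vecof \<alpha> \<beta> = vecof \<alpha>' \<beta>'"
  unfolding vecof_def by (rule ext) auto

lemma bv_in_B: "J \<in> R \<Longrightarrow> bv (J,b) \<in> B" unfolding B_def by auto

lemma span_B: "vspan_over K B = {vecof \<alpha> \<beta> | \<alpha> \<beta>. \<forall>J\<in>R. \<alpha> J \<in> K \<and> \<beta> J \<in> K}"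
proof (intro Set.set_eqI iffI)
  fix v assume "v \<in> vspan_over K B"
  then obtain c where c: "\<forall>b\<in>B. c b \<in> K" "v = (\<lambda>I. \<Sum>b\<in>B. c b * b I)" by (auto simp: vspan_over_def)
  then have "v = vecof (\<lambda>J. c (bv (J,True))) (\<lambda>J. c (bv (J,False)))" using sum_B_eval by simp
  moreover have "\<forall>J\<in>R. c (bv (J,True)) \<in> K \<and> c (bv (J,False)) \<in> K" using c(1) bv_in_B by blast
  ultimately show "v \<in> {vecof \<alpha> \<beta> | \<alpha> \<beta>. \<forall>J\<in>R. \<alpha> J \<in> K \<and> \<beta> J \<in> K}" by blast
next
  fix v assume "v \<in> {vecof \<alpha> \<beta> | \<alpha> \<beta>. \<forall>J\<in>R. \<alpha> J \<in> K \<and> \<beta> J \<in> K}"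
  then obtain \<alpha> \<beta> where ab: "\<forall>J\<in>R. \<alpha> J \<in> K \<and> \<beta> J \<in> K" "v = vecof \<alpha> \<beta>" by blast
  define c where "c b = (case inv_into (R \<times> UNIV) bv b of (J,b0) \<Rightarrow> if b0 then \<alpha> J else \<beta> J)" for b
  have cb: "c (bv (J,b0)) = (if b0 then \<alpha> J else \<beta> J)" if "J \<in> R" for J b0
    unfolding c_def using inv_into_f_f[OF inj_bv, of "(J,b0)"] that by simp
  have cK: "\<forall>b\<in>B. c b \<in> K" unfolding B_def using cb ab(1) by auto
  have "(\<lambda>I. \<Sum>b\<in>B. c b * b I) = vecof (\<lambda>J. c (bv (J,True))) (\<lambda>J. c (bv (J,False)))" by (rule sum_B_eval)
  also have "\<dots> = vecof \<alpha> \<beta>" by (rule vecof_cong) (simp add: cb)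
  finally show "v \<in> vspan_over K B" unfolding vspan_over_def using cK ab(2) by auto
qed

lemma vecof_zero:
  assumes "vecof \<alpha> \<beta> = (\<lambda>I. 0)" "J \<in> R" shows "\<alpha> J = 0 \<and> \<beta> J = 0"
proof -
  have JW: "J \<in> WI" using assms(2) R_sub by auto
  have e1: "\<alpha> J + \<beta> J * xi = 0" using fun_cong[OF assms(1), of J] assms(2) by (simp add: vecof_def)
  have "vecof \<alpha> \<beta> (cmpl m J) = C (cmpl m J) * (\<alpha> J - \<beta> J * xi)"
    using R_not_both[OF assms(2)] cmpl_WI[OF JW] cmpl_inv[OF JW] assms(2) by (simp add: vecof_def)
  then have "C (cmpl m J) * (\<alpha> J - \<beta> J * xi) = 0" using assms(1) by simp
  then have e2: "\<alpha> J - \<beta> J * xi = 0" using C_nz[OF cmpl_WI[OF JW]] by simp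
  from e1 e2 have "2 * (\<beta> J * xi) = 0" by (simp add: algebra_simps)
  then have "\<beta> J = 0" using xinz by simp
  then show ?thesis using e1 by simp
qed

lemma indep_B: "vindep_over K B"
  unfolding vindep_over_def
proof (intro allI impI ballI)
  fix c b assume h: "(\<forall>b\<in>B. c b \<in> K) \<and> (\<lambda>I. \<Sum>b\<in>B. c b * b I) = (\<lambda>I. 0)" and b: "b \<in> B"
  have z: "vecof (\<lambda>J. c (bv (J,True))) (\<lambda>J. c (bv (J,False))) = (\<lambda>I. 0)" using h sum_B_eval by simp
  obtain J b0 where Jb: "J \<in> R" "b = bv (J,b0)" using b unfolding B_def by auto
  show "c b = 0" using vecof_zero[OF z Jb(1)] Jb by (cases b0) auto
qed

lemma finite_B: "finite B" unfolding B_def using finite_R by simp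

lemma vecof_ws:
  assumes "\<forall>J\<in>R. \<alpha> J \<in> E \<and> \<beta> J \<in> E" shows "vecof \<alpha> \<beta> \<in> wedge_space E m k"
  unfolding wedge_space_def
proof (intro CollectI conjI allI impI)
  fix I
  show "vecof \<alpha> \<beta> I \<in> E"
    unfolding vecof_def using assms xiE C_E0 E0E
    by (auto intro!: sf_add[OF sfE] sf_mult[OF sfE] sf_diff[OF sfE] sf_0[OF sfE])
  show "I \<notin> WI \<Longrightarrow> vecof \<alpha> \<beta> I = 0" unfolding vecof_def using R_sub by auto
qed

lemma span_E: "vspan_over E B = wedge_space E m k"
proof
  show "vspan_over E B \<subseteq> wedge_space E m k" unfolding span_B using vecof_ws by blast
next
  show "wedge_space E m k \<subseteq> vspan_over E B"
  proof
    fix v assume v: "v \<in> wedge_space E m k"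
    have vE: "v I \<in> E" for I using v by (simp add: wedge_space_def)
    have v0: "I \<notin> WI \<Longrightarrow> v I = 0" for I using v by (simp add: wedge_space_def)
    define \<alpha> where "\<alpha> J = (v J + v (cmpl m J) * C J) / 2" for J
    define \<beta> where "\<beta> J = (v J - v (cmpl m J) * C J) / (2 * xi)" for J
    have inE: "\<alpha> J \<in> E \<and> \<beta> J \<in> E" for J
      unfolding \<alpha>_def \<beta>_def using vE C_E0 E0E xiE
      by (auto intro!: sf_divide[OF sfE] sf_add[OF sfE] sf_diff[OF sfE] sf_mult[OF sfE] sf_two[OF sfE])
    have "vecof \<alpha> \<beta> = v"
    proof (rule ext)
      fix I
      show "vecof \<alpha> \<beta> I = v I"
      proof (cases "I \<in> R")
        case True
        then show ?thesis using xinz by (simp add: vecof_def \<alpha>_def \<beta>_def field_simps)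
      next
        case False
        show ?thesis
        proof (cases "I \<in> WI \<and> cmpl m I \<in> R")
          case True
          have ci: "cmpl m (cmpl m I) = I" using True cmpl_inv by blast
          have "vecof \<alpha> \<beta> I = C I * (v I * C (cmpl m I))"
            using True False xinz ci by (simp add: vecof_def \<alpha>_def \<beta>_def field_simps)
          also have "\<dots> = v I * (C I * C (cmpl m I))" by simp
          finally show ?thesis using C_pair True ci by simp
        next
          case f2: False
          then have "I \<notin> WI" using False R_cases by blast
          then show ?thesis using v0 False f2 by (simp add: vecof_def)
        qed
      qed
    qed
    then show "v \<in> vspan_over E B" unfolding span_B using inE by blast
  qed
qed

lemma tau_ws: "v \<in> wedge_space E m k \<Longrightarrow> tau v \<in> wedge_space E m k"
  unfolding wedge_space_def tau_def using C_E0 E0E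
  by (auto intro!: sf_mult[OF sfE] cnj_E sf_0[OF sfE])

lemma span_E0: "vspan_over E0 B = {v \<in> wedge_space E m k. tau v = v}"
proof
  show "vspan_over E0 B \<subseteq> {v \<in> wedge_space E m k. tau v = v}"
  proof
    fix v assume "v \<in> vspan_over E0 B"
    then obtain \<alpha> \<beta> where ab: "\<forall>J\<in>R. \<alpha> J \<in> E0 \<and> \<beta> J \<in> E0" "v = vecof \<alpha> \<beta>" unfolding span_B by blast
    have ws: "v \<in> wedge_space E m k" using ab E0E by (auto intro!: vecof_ws)
    have rl: "J \<in> R \<Longrightarrow> cnj (\<alpha> J) = \<alpha> J \<and> cnj (\<beta> J) = \<beta> J" for J using ab(1) real_E0 by blast
    have "tau v = v"
    proof (rule ext)
      fix I
      show "tau v I = v I"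
      proof (cases "I \<in> R")
        case True
        have IW: "I \<in> WI" using True R_sub by auto
        have "v (cmpl m I) = C (cmpl m I) * (\<alpha> I - \<beta> I * xi)"
          using ab(2) R_not_both[OF True] cmpl_WI[OF IW] cmpl_inv[OF IW] True by (simp add: vecof_def)
        then have "cnj (v (cmpl m I)) = C (cmpl m I) * (\<alpha> I + \<beta> I * xi)"
          using rl[OF True] C_real[of "cmpl m I"] cnj_xi by simp
        then have "tau v I = (C I * C (cmpl m I)) * (\<alpha> I + \<beta> I * xi)"
          using IW by (simp add: tau_def)
        then show ?thesis using C_pair[OF IW] ab(2) True by (simp add: vecof_def)
      next
        case False
        show ?thesis
        proof (cases "I \<in> WI \<and> cmpl m I \<in> R")
          case True
          have ci: "cmpl m (cmpl m I) = I" using True cmpl_inv by blast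
          have "v (cmpl m I) = \<alpha> (cmpl m I) + \<beta> (cmpl m I) * xi" using ab(2) True by (simp add: vecof_def)
          then have "tau v I = C I * (\<alpha> (cmpl m I) - \<beta> (cmpl m I) * xi)"
            using True rl[of "cmpl m I"] cnj_xi by (simp add: tau_def)
          then show ?thesis using ab(2) True False by (simp add: vecof_def)
        next
          case f2: False
          then have "I \<notin> WI" using False R_cases by blast
          then show ?thesis using ab(2) by (simp add: tau_def vecof_def R_def)
        qed
      qed
    qed
    then show "v \<in> {v \<in> wedge_space E m k. tau v = v}" using ws by simp
  qed
next
  show "{v \<in> wedge_space E m k. tau v = v} \<subseteq> vspan_over E0 B"
  proof
    fix v assume "v \<in> {v \<in> wedge_space E m k. tau v = v}"
    then have v: "v \<in> wedge_space E m k" and fx: "tau v = v" by auto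
    have vE: "v I \<in> E" for I using v by (simp add: wedge_space_def)
    have v0: "I \<notin> WI \<Longrightarrow> v I = 0" for I using v by (simp add: wedge_space_def)
    have "\<forall>J. \<exists>ab. fst ab \<in> E0 \<and> snd ab \<in> E0 \<and> v J = fst ab + snd ab * xi"
      using decomp[OF vE] by fastforce
    then obtain f where f: "\<And>J. fst (f J) \<in> E0 \<and> snd (f J) \<in> E0 \<and> v J = fst (f J) + snd (f J) * xi"
      by metis
    define \<alpha> where "\<alpha> J = fst (f J)" for J
    define \<beta> where "\<beta> J = snd (f J)" for J
    have ab: "\<alpha> J \<in> E0" "\<beta> J \<in> E0" "v J = \<alpha> J + \<beta> J * xi" for J using f unfolding \<alpha>_def \<beta>_def by auto
    have "vecof \<alpha> \<beta> = v"
    proof (rule ext)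
      fix I
      show "vecof \<alpha> \<beta> I = v I"
      proof (cases "I \<in> R")
        case True then show ?thesis using ab by (simp add: vecof_def)
      next
        case False
        show ?thesis
        proof (cases "I \<in> WI \<and> cmpl m I \<in> R")
          case True
          have "v I = tau v I" using fx by simp
          also have "\<dots> = C I * cnj (\<alpha> (cmpl m I) + \<beta> (cmpl m I) * xi)"
            using True ab(3)[of "cmpl m I"] by (simp add: tau_def)
          also have "\<dots> = C I * (\<alpha> (cmpl m I) - \<beta> (cmpl m I) * xi)"
            using real_E0[OF ab(1)] real_E0[OF ab(2)] cnj_xi by simp
          finally show ?thesis using True False by (simp add: vecof_def)
        next
          case f2: False
          then have "I \<notin> WI" using False R_cases by blast
          then show ?thesis using v0 False f2 by (simp add: vecof_def)
        qed
      qed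
    qed
    then show "v \<in> vspan_over E0 B" unfolding span_B using ab by blast
  qed
qed

lemma sub_carrier:
  assumes g: "g \<in> carrier_mat m m" and I: "I \<in> WI" and J: "J \<in> WI"
  shows "submatrix g I J \<in> carrier_mat k k"
proof -
  have "{i. i < m \<and> i \<in> I} = I" "{i. i < m \<and> i \<in> J} = J" using WI_sub[OF I] WI_sub[OF J] by auto
  then show ?thesis using g WI_card[OF I] WI_card[OF J] by (simp add: submatrix_def)
qed

lemma det_sub_E:
  assumes g: "g \<in> SU_points E m (diagm m a)" and I: "I \<in> WI" and J: "J \<in> WI"
  shows "det (submatrix g I J) \<in> E"
proof -
  have gc: "g \<in> carrier_mat m m" and gE: "\<And>i j. i < m \<Longrightarrow> j < m \<Longrightarrow> g $$ (i,j) \<in> E"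
    using g by (auto simp: SU_points_def)
  have cI: "card {i. i < dim_row g \<and> i \<in> I} = k" "card {i. i < dim_col g \<and> i \<in> J} = k"
  proof -
    have "{i. i < dim_row g \<and> i \<in> I} = I" "{i. i < dim_col g \<and> i \<in> J} = J"
      using WI_sub[OF I] WI_sub[OF J] gc by auto
    then show "card {i. i < dim_row g \<and> i \<in> I} = k" "card {i. i < dim_col g \<and> i \<in> J} = k"
      using WI_card[OF I] WI_card[OF J] by auto
  qed
  show ?thesis
  proof (rule det_in_sf[OF sfE sub_carrier[OF gc I J]])
    fix i j assume i: "i < k" and j: "j < k"
    have pi: "pick I i \<in> I" "pick J j \<in> J" using pick_in_set[of i I] pick_in_set[of j J] i j WI_card[OF I] WI_card[OF J] by auto
    have "submatrix g I J $$ (i,j) = g $$ (pick I i, pick J j)"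
      by (rule submatrix_index) (use cI i j in auto)
    then show "submatrix g I J $$ (i,j) \<in> E" using gE pi WI_sub[OF I] WI_sub[OF J] by auto
  qed
qed

lemma act_ws:
  assumes g: "g \<in> SU_points E m (diagm m a)" and v: "v \<in> wedge_space E m k"
  shows "wedge_act m k g v \<in> wedge_space E m k"
  unfolding wedge_space_def wedge_act_def
  using v det_sub_E[OF g] by (auto intro!: sf_sum[OF sfE] sf_mult[OF sfE] sf_0[OF sfE] simp: wedge_space_def)

lemma key_C:
  assumes g: "g \<in> SU_points E m (diagm m a)" and I: "I \<in> WI" and J: "J \<in> WI"
  shows "det (submatrix g I J) * C J = C I * cnj (det (submatrix g (cmpl m I) (cmpl m J)))"
proof -
  have gc: "g \<in> carrier_mat m m" and d: "det g = 1" and u: "conj_transpose g * diagm m a * g = diagm m a"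
    using g by (auto simp: SU_points_def)
  have "det (submatrix g I J) * cc m k a J = cc m k a I * cnj (det (submatrix g (cmpl m I) (cmpl m J)))"
    by (rule key_identity[OF gc d anz u WI_sub[OF I] WI_card[OF I] WI_sub[OF J] WI_card[OF J]])
  then show ?thesis unfolding C_def by (simp add: field_simps tnz)
qed

lemma cmpl_bij: "bij_betw (cmpl m) WI WI"
  by (rule bij_betwI[where g = "cmpl m"]) (auto simp: cmpl_WI cmpl_inv)

lemma tau_act:
  assumes g: "g \<in> SU_points E m (diagm m a)"
  shows "tau (wedge_act m k g v) = wedge_act m k g (tau v)"
proof (rule ext)
  fix I
  show "tau (wedge_act m k g v) I = wedge_act m k g (tau v) I"
  proof (cases "I \<in> WI")
    case False then show ?thesis by (simp add: tau_def wedge_act_def)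
  next
    case True
    have cW: "cmpl m I \<in> WI" using cmpl_WI[OF True] .
    have "tau (wedge_act m k g v) I = C I * cnj (\<Sum>J\<in>WI. det (submatrix g (cmpl m I) J) * v J)"
      using True cW by (simp add: tau_def wedge_act_def)
    also have "\<dots> = (\<Sum>J\<in>WI. C I * cnj (det (submatrix g (cmpl m I) J)) * cnj (v J))"
      by (simp add: cnj_sum sum_distrib_left mult.assoc)
    also have "\<dots> = (\<Sum>J\<in>WI. C I * cnj (det (submatrix g (cmpl m I) (cmpl m J))) * cnj (v (cmpl m J)))"
      using sum.reindex_bij_betw[OF cmpl_bij, of "\<lambda>J. C I * cnj (det (submatrix g (cmpl m I) J)) * cnj (v J)"]
      by simp
    also have "\<dots> = (\<Sum>J\<in>WI. det (submatrix g I J) * (C J * cnj (v (cmpl m J))))"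
      by (rule sum.cong[OF refl]) (simp add: key_C[OF g True] mult.assoc[symmetric])
    also have "\<dots> = wedge_act m k g (tau v) I"
      using True by (simp add: wedge_act_def tau_def)
    finally show ?thesis .
  qed
qed

theorem main:
  "\<exists>W0 B. W0 \<subseteq> wedge_space E m k
     \<and> (\<forall>g\<in>SU_points E m (diagm m a). \<forall>w\<in>W0. wedge_act m k g w \<in> W0)
     \<and> finite B \<and> W0 = vspan_over E0 B
     \<and> vindep_over E B \<and> vspan_over E B = wedge_space E m k"
proof (intro exI conjI)
  show "vspan_over E0 B \<subseteq> wedge_space E m k" using span_E0 by auto
  show "\<forall>g\<in>SU_points E m (diagm m a). \<forall>w\<in>vspan_over E0 B. wedge_act m k g w \<in> vspan_over E0 B"
  proof (intro ballI)
    fix g w assume g: "g \<in> SU_points E m (diagm m a)" and w: "w \<in> vspan_over E0 B"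
    then have ws: "w \<in> wedge_space E m k" and fw: "tau w = w" using span_E0 by auto
    have "tau (wedge_act m k g w) = wedge_act m k g w" using tau_act[OF g] fw by simp
    then show "wedge_act m k g w \<in> vspan_over E0 B" using span_E0 act_ws[OF g ws] by auto
  qed
qed (auto simp: finite_B indep_B span_E)

end



lemma sf_power: "subfield_C F \<Longrightarrow> x \<in> F \<Longrightarrow> x ^ j \<in> F"
  by (induction j) (auto intro: sf_1 sf_mult)

lemma id_emb: "subfield_C F \<Longrightarrow> (\<lambda>x. if x \<in> F then x else 0) \<in> embeddings F"
  unfolding embeddings_def using sf_1[of F] by (auto intro: sf_add sf_mult)

lemma totally_real_sub: "subfield_C F \<Longrightarrow> totally_real F \<Longrightarrow> F \<subseteq> \<real>"
proof
  fix x assume F: "subfield_C F" "totally_real F" and x: "x \<in> F"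
  have "(\<lambda>x. if x \<in> F then x else 0) \<in> real_embeddings F" using id_emb[OF F(1)] F(2)
    by (simp add: totally_real_def)
  then show "x \<in> \<real>" using x by (auto simp: real_embeddings_def)
qed

lemma two_dim:
  assumes F: "subfield_C F" "F \<subseteq> \<real>" and sp: "\<And>x. x \<in> E \<Longrightarrow> \<exists>f1\<in>F. \<exists>f2\<in>F. x = f1 * b1 + f2 * b2"
    and one: "1 \<in> E" and x0: "x0 \<in> E" "x0 \<notin> \<real>"
  shows "\<And>x. x \<in> E \<Longrightarrow> \<exists>\<alpha>\<in>F. \<exists>\<beta>\<in>F. x = \<alpha> + \<beta> * x0"
proof -
  obtain a1 a2 where a: "a1 \<in> F" "a2 \<in> F" "1 = a1 * b1 + a2 * b2" using sp[OF one] by blast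
  obtain c1 c2 where c: "c1 \<in> F" "c2 \<in> F" "x0 = c1 * b1 + c2 * b2" using sp[OF x0(1)] by blast
  define D where "D = a1 * c2 - a2 * c1"
  have DF: "D \<in> F" unfolding D_def using a c F by (auto intro: sf_diff sf_mult)
  show "\<exists>\<alpha>\<in>F. \<exists>\<beta>\<in>F. x = \<alpha> + \<beta> * x0" if x: "x \<in> E" for x
  proof (cases "D = 0")
    case False
    obtain f1 f2 where f: "f1 \<in> F" "f2 \<in> F" "x = f1 * b1 + f2 * b2" using sp[OF x] by blast
    define \<alpha> where "\<alpha> = (f1 * c2 - f2 * c1) / D"
    define \<beta> where "\<beta> = (f2 * a1 - f1 * a2) / D"
    have inF: "\<alpha> \<in> F" "\<beta> \<in> F" unfolding \<alpha>_def \<beta>_def using f a c DF F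
      by (auto intro!: sf_divide sf_diff sf_mult)
    have "(f1 * c2 - f2 * c1) * 1 + (f2 * a1 - f1 * a2) * x0
        = (f1 * c2 - f2 * c1) * (a1 * b1 + a2 * b2) + (f2 * a1 - f1 * a2) * (c1 * b1 + c2 * b2)"
      using a(3) c(3) by simp
    also have "\<dots> = D * (f1 * b1 + f2 * b2)" unfolding D_def by (simp add: algebra_simps)
    finally have "(f1 * c2 - f2 * c1) * 1 + (f2 * a1 - f1 * a2) * x0 = D * x" using f(3) by simp
    then have "x = ((f1 * c2 - f2 * c1) * 1 + (f2 * a1 - f1 * a2) * x0) / D" using False
      by (simp add: nonzero_eq_divide_eq mult.commute)
    also have "\<dots> = \<alpha> + \<beta> * x0" unfolding \<alpha>_def \<beta>_def by (simp add: add_divide_distrib)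
    finally have "x = \<alpha> + \<beta> * x0" .
    then show ?thesis using inF by blast
  next
    case True
    have e1: "c1 * 1 - a1 * x0 = 0"
    proof -
      have "c1 * 1 - a1 * x0 = c1 * (a1 * b1 + a2 * b2) - a1 * (c1 * b1 + c2 * b2)" using a(3) c(3) by simp
      also have "\<dots> = - D * b2" unfolding D_def by (simp add: algebra_simps)
      finally show ?thesis using True by simp
    qed
    have e2: "c2 * 1 - a2 * x0 = 0"
    proof -
      have "c2 * 1 - a2 * x0 = c2 * (a1 * b1 + a2 * b2) - a2 * (c1 * b1 + c2 * b2)" using a(3) c(3) by simp
      also have "\<dots> = D * b1" unfolding D_def by (simp add: algebra_simps)
      finally show ?thesis using True by simp
    qed
    have "a1 \<noteq> 0 \<or> a2 \<noteq> 0" using a(3) by auto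
    then have "x0 \<in> F"
    proof
      assume "a1 \<noteq> 0" then have "x0 = c1 / a1" using e1 by (simp add: field_simps)
      then show ?thesis using a c F by (auto intro: sf_divide)
    next
      assume "a2 \<noteq> 0" then have "x0 = c2 / a2" using e2 by (simp add: field_simps)
      then show ?thesis using a c F by (auto intro: sf_divide)
    qed
    then show ?thesis using x0(2) F(2) by auto
  qed
qed

lemma get_xi:
  assumes sfE: "subfield_C E" and sfE0: "subfield_C E0" and E0E: "E0 \<subseteq> E" and E0R: "E0 \<subseteq> \<real>"
    and CM: "CM_field E" and mx: "max_totally_real_subfield E E0"
  shows "\<exists>xi. xi \<in> E \<and> Re xi = 0 \<and> xi \<noteq> 0 \<and> (\<forall>x\<in>E. \<exists>\<alpha>\<in>E0. \<exists>\<beta>\<in>E0. x = \<alpha> + \<beta> * xi)"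
proof -
  obtain F where F: "subfield_C F" "F \<subseteq> E" "totally_real F" "ext_degree F E 2"
    using CM by (auto simp: CM_field_def)
  have FE0: "F \<subseteq> E0" using mx F by (auto simp: max_totally_real_subfield_def)
  have FR: "F \<subseteq> \<real>" by (rule totally_real_sub[OF F(1) F(3)])
  have notR: "\<not> E \<subseteq> \<real>"
  proof
    assume "E \<subseteq> \<real>"
    then have "(\<lambda>x. if x \<in> E then x else 0) \<in> real_embeddings E"
      using id_emb[OF sfE] by (auto simp: real_embeddings_def)
    then show False using CM by (auto simp: CM_field_def totally_imaginary_def)
  qed
  then obtain x0 where x0: "x0 \<in> E" "x0 \<notin> \<real>" by auto
  obtain B0 where B0: "finite B0" "B0 \<subseteq> E" "card B0 = 2" "E = span_over F B0"
    using F(4) by (auto simp: ext_degree_def)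
  obtain b1 b2 where b: "B0 = {b1, b2}" "b1 \<noteq> b2" using B0(3) by (auto simp: card_2_iff)
  have sp: "\<exists>f1\<in>F. \<exists>f2\<in>F. x = f1 * b1 + f2 * b2" if "x \<in> E" for x
  proof -
    from that B0(4) obtain c where "\<forall>b\<in>B0. c b \<in> F" "x = (\<Sum>b\<in>B0. c b * b)" by (auto simp: span_over_def)
    then show ?thesis using b by auto
  qed
  have dec: "\<And>x. x \<in> E \<Longrightarrow> \<exists>\<alpha>\<in>F. \<exists>\<beta>\<in>F. x = \<alpha> + \<beta> * x0"
    by (rule two_dim[OF F(1) FR sp sf_1[OF sfE] x0]) auto
  obtain u v where uv: "u \<in> F" "v \<in> F" "x0 * x0 = u + v * x0"
    using dec[OF sf_mult[OF sfE x0(1) x0(1)]] by blast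
  define xi where "xi = 2 * x0 - v"
  have xiE: "xi \<in> E" unfolding xi_def using x0 uv F(2) sf_two[OF sfE]
    by (auto intro!: sf_diff[OF sfE] sf_mult[OF sfE])
  have vR: "v \<in> \<real>" "u \<in> \<real>" using uv FR by auto
  have "xi * xi = 4 * (x0 * x0) - 4 * v * x0 + v * v" unfolding xi_def by (simp add: algebra_simps)
  then have sq: "xi * xi = 4 * u + v * v" using uv(3) by (simp add: algebra_simps)
  have imv: "Im v = 0" "Im u = 0" using vR complex_is_Real_iff by auto
  have imx0: "Im x0 \<noteq> 0" using x0(2) complex_is_Real_iff by blast
  have imxi: "Im xi = 2 * Im x0" unfolding xi_def using imv by simp
  have "Im (xi * xi) = 0" unfolding sq using imv by simp
  then have "2 * Re xi * Im xi = 0" by auto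
  then have rexi: "Re xi = 0" using imxi imx0 by simp
  have xinz: "xi \<noteq> 0" using imxi imx0 by auto
  have "\<forall>x\<in>E. \<exists>\<alpha>\<in>E0. \<exists>\<beta>\<in>E0. x = \<alpha> + \<beta> * xi"
  proof
    fix x assume "x \<in> E"
    then obtain \<alpha> \<beta> where ab: "\<alpha> \<in> F" "\<beta> \<in> F" "x = \<alpha> + \<beta> * x0" using dec by blast
    have "x = (\<alpha> + \<beta> * v / 2) + (\<beta> / 2) * xi" unfolding xi_def ab(3) by (simp add: field_simps)
    moreover have "\<alpha> + \<beta> * v / 2 \<in> F" "\<beta> / 2 \<in> F" using ab uv sf_two[OF F(1)]
      by (auto intro!: sf_add[OF F(1)] sf_divide[OF F(1)] sf_mult[OF F(1)])
    ultimately show "\<exists>\<alpha>\<in>E0. \<exists>\<beta>\<in>E0. x = \<alpha> + \<beta> * xi" using FE0 by blast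
  qed
  then show ?thesis using xiE rexi xinz by blast
qed

lemma prod_pairs:
  assumes pair: "\<And>s. n \<le> s \<Longrightarrow> even (s - n) \<Longrightarrow> f s = f (Suc s)"
    and inF: "\<And>s. f s \<in> F" and sF: "subfield_C F"
  shows "2 * r \<le> n' \<Longrightarrow> \<exists>t\<in>F. (\<Prod>s\<in>{n..<n+2*r}. f s) = t^2"
proof (induction r)
  case 0 then show ?case using sf_1[OF sF] by (intro bexI[of _ 1]) auto
next
  case (Suc r)
  then obtain t where t: "t \<in> F" "(\<Prod>s\<in>{n..<n+2*r}. f s) = t^2" by auto
  have "{n..<n+2*Suc r} = insert (n+2*r+1) (insert (n+2*r) {n..<n+2*r})" by auto
  then have "(\<Prod>s\<in>{n..<n+2*Suc r}. f s) = f (n+2*r+1) * (f (n+2*r) * t^2)" using t(2) by simp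
  also have "f (n+2*r+1) = f (n+2*r)" using pair[of "n+2*r"] by simp
  finally have "(\<Prod>s\<in>{n..<n+2*Suc r}. f s) = (t * f (n+2*r))^2" by (simp add: power2_eq_square algebra_simps)
  then show ?case using t(1) inF sF by (intro bexI[of _ "t * f (n+2*r)"]) (auto intro: sf_mult)
qed

lemma par_l1: "(p::nat) \<le> n \<Longrightarrow> p mod 2 = n mod 2 \<Longrightarrow> (2*n - p) mod 2 = n mod 2"
proof -
  assume a: "p \<le> n" "p mod 2 = n mod 2"
  then obtain r where r: "n = p + r" using le_Suc_ex by blast
  have e: "2*n - p = p + 2*r" using r by arith
  have "(p + 2*r) mod 2 = p mod 2" by simp
  then show ?thesis using a(2) e by simp
qed
lemma par_l2: "(n::nat) \<le> s \<Longrightarrow> even (s - n) \<Longrightarrow> x mod 2 = n mod 2 \<Longrightarrow> x \<noteq> Suc s"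
proof
  assume a: "n \<le> s" "even (s - n)" "x mod 2 = n mod 2" "x = Suc s"
  obtain u where u: "s - n = 2*u" using a(2) by blast
  have "s = n + 2*u" using u a(1) by arith
  then have "x = Suc (n + 2*u)" using a(4) by simp
  then have "even x \<longleftrightarrow> odd n" by simp
  moreover have "even x \<longleftrightarrow> even n" using a(3) by (metis even_iff_mod_2_eq_zero)
  ultimately show False by simp
qed

theorem lemma3p5:
  fixes n d :: nat and E E0 :: "complex set"
    and \<sigma> :: "nat \<Rightarrow> complex \<Rightarrow> complex" and p q :: "nat \<Rightarrow> nat"
    and \<delta> :: "nat \<Rightarrow> complex"
  assumes "n \<ge> 1"
    and "CM_field E" and "max_totally_real_subfield E E0"
    and "ext_degree \<rat> E0 d"
    and "bij_betw \<sigma> {1..d} (real_embeddings E0)"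
    and "p 1 = n"
    and "\<And>i. i \<in> {2..d} \<Longrightarrow> 0 < p i \<and> p i < n"
    and "\<And>i. i \<in> {1..d} \<Longrightarrow> p i mod 2 = n mod 2"
    and "\<And>i j. i \<in> {1..d} \<Longrightarrow> j \<in> {1..d} \<Longrightarrow> i \<le> j \<Longrightarrow> p j \<le> p i"
    and "\<And>i. q i = 2 * n - p i"
    and "\<And>i. i \<in> {1..d} \<Longrightarrow> \<delta> i \<in> E0"
    and "\<And>i. i \<in> {1..d} \<Longrightarrow> Re (\<sigma> i (\<delta> i)) > 0"
    and "\<And>i j. i \<in> {1..d} \<Longrightarrow> j \<in> {1..d} \<Longrightarrow> i \<noteq> j \<Longrightarrow> Re (\<sigma> i (\<delta> j)) < 0"
  shows "\<exists>W0 B. W0 \<subseteq> wedge_space E (2*n) n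
     \<and> (\<forall>g\<in>SU_points E (2*n) (herm_matrix n d q \<delta>). \<forall>w\<in>W0. wedge_act (2*n) n g w \<in> W0)
     \<and> finite B \<and> W0 = vspan_over E0 B
     \<and> vindep_over E B \<and> vspan_over E B = wedge_space E (2*n) n"
proof -
  note n1 = assms(1) and CM = assms(2) and mx = assms(3) and deg = assms(4) and sig = assms(5)
    and p1 = assms(6) and prange = assms(7) and ppar = assms(8) and qdef = assms(10)
    and dE0 = assms(11) and dpos = assms(12)
  have sfE: "subfield_C E" using CM by (simp add: CM_field_def number_field_def)
  have sfE0: "subfield_C E0" and E0E: "E0 \<subseteq> E" and trE0: "totally_real E0"
    using mx by (auto simp: max_totally_real_subfield_def)
  have E0R: "E0 \<subseteq> \<real>" by (rule totally_real_sub[OF sfE0 trE0])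
  obtain xi where xi: "xi \<in> E" "Re xi = 0" "xi \<noteq> 0" "\<forall>x\<in>E. \<exists>\<alpha>\<in>E0. \<exists>\<beta>\<in>E0. x = \<alpha> + \<beta> * xi"
    using get_xi[OF sfE sfE0 E0E E0R CM mx] by blast
  have d1: "d \<ge> 1"
  proof (rule ccontr)
    assume "\<not> d \<ge> 1"
    then have "d = 0" by simp
    then obtain B0 where "finite B0" "card B0 = 0" "E0 = span_over \<rat> B0" using deg by (auto simp: ext_degree_def)
    then have "E0 = span_over \<rat> {}" by simp
    then have "E0 = {0}" by (auto simp: span_over_def)
    then show False using sf_1[OF sfE0] by simp
  qed
  have dnz: "\<delta> j \<noteq> 0" if j: "j \<in> {1..d}" for j
  proof
    assume z: "\<delta> j = 0"
    have "\<sigma> j \<in> real_embeddings E0" using sig j by (auto simp: bij_betw_def)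
    then have emb: "\<sigma> j \<in> embeddings E0" by (simp add: real_embeddings_def)
    have "\<forall>x\<in>E0. \<forall>y\<in>E0. \<sigma> j (x + y) = \<sigma> j x + \<sigma> j y" using emb by (simp add: embeddings_def)
    then have "\<sigma> j (0 + 0) = \<sigma> j 0 + \<sigma> j 0" using sf_0[OF sfE0] by blast
    then have "\<sigma> j 0 = 0" by simp
    then show False using dpos[OF j] z by simp
  qed
  have qprops: "n \<le> q j \<and> q j \<le> 2*n - 1 \<and> q j mod 2 = n mod 2" if j: "j \<in> {1..d}" for j
  proof -
    have pj: "1 \<le> p j \<and> p j \<le> n"
    proof (cases "j = 1")
      case True then show ?thesis using p1 n1 by simp
    next
      case False then have "j \<in> {2..d}" using j by auto
      then show ?thesis using prange by fastforce
    qed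
    have "p j mod 2 = n mod 2" using ppar[OF j] .
    then have "q j mod 2 = n mod 2" using par_l1[of "p j" n] pj qdef[of j] by simp
    moreover have "n \<le> q j" "q j \<le> 2*n - 1" using pj qdef[of j] by arith+
    ultimately show ?thesis by simp
  qed
  define a where "a = herm_entry d q \<delta>"
  have a_low: "a s = -1" if "s < n" for s
  proof -
    have "{j\<in>{1..d}. q j \<le> s} = {}" using qprops that by fastforce
    then show ?thesis by (simp add: a_def herm_entry_def)
  qed
  have a_top: "a (2*n-1) = 1"
  proof -
    have "{j\<in>{1..d}. q j \<le> 2*n-1} = {1..d}" using qprops by auto
    then show ?thesis using d1 by (simp add: a_def herm_entry_def)
  qed
  have a_pair: "a s = a (Suc s)" if "n \<le> s" "even (s - n)" for s
  proof -
    have "q j \<noteq> Suc s" if "j \<in> {1..d}" for j using par_l2[of n s "q j"] qprops[OF that] \<open>n \<le> s\<close> \<open>even (s - n)\<close> by blast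
    then have "{j\<in>{1..d}. q j \<le> s} = {j\<in>{1..d}. q j \<le> Suc s}" by (auto simp: le_Suc_eq)
    then show ?thesis by (simp add: a_def herm_entry_def)
  qed
  have aE0: "a s \<in> E0 \<and> a s \<noteq> 0" for s
  proof -
    define i where "i = card {j\<in>{1..d}. q j \<le> s}"
    have ai: "a s = (if i = 0 then -1 else if i \<ge> d then 1 else (-1) ^ (i - 1) * (\<Prod>j=1..i. \<delta> j))"
      by (simp add: a_def herm_entry_def i_def Let_def)
    have m1: "-1 \<in> E0" using sf_uminus[OF sfE0 sf_1[OF sfE0]] .
    show ?thesis
    proof (cases "i = 0 \<or> i \<ge> d")
      case True then show ?thesis using m1 sf_1[OF sfE0] ai by auto
    next
      case False
      then have ai': "a s = (-1) ^ (i - 1) * (\<Prod>j=1..i. \<delta> j)" using ai by simp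
      have jj: "j \<in> {1..i} \<Longrightarrow> j \<in> {1..d}" for j using False by auto
      have "(\<Prod>j=1..i. \<delta> j) \<in> E0" by (rule sf_prod[OF sfE0]) (use dE0 jj in auto)
      moreover have "(\<Prod>j=1..i. \<delta> j) \<noteq> 0" using dnz jj by auto
      ultimately show ?thesis unfolding ai' using sf_power[OF sfE0 m1] by (auto intro: sf_mult[OF sfE0])
    qed
  qed
  obtain t0 where t0: "t0 \<in> E0" "(\<Prod>s\<in>{n..<n+2*(n div 2)}. a s) = t0^2"
    using prod_pairs[of n a E0 "n div 2" n, OF a_pair] aE0 sfE0 by auto
  have P2: "(\<Prod>s\<in>{n..<n+n}. a s) = t0^2"
  proof (cases "even n")
    case True then have "n + 2*(n div 2) = n + n" by simp
    then show ?thesis using t0 by simp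
  next
    case False then have e: "n + 2*(n div 2) = 2*n - 1" by presburger
    have "{n..<n+n} = insert (2*n-1) {n..<2*n-1}" using n1 by auto
    then have "(\<Prod>s\<in>{n..<n+n}. a s) = a (2*n-1) * (\<Prod>s\<in>{n..<2*n-1}. a s)" by simp
    then show ?thesis using t0 e a_top by simp
  qed
  have P1: "(\<Prod>s<n. a s) = (-1)^n" using a_low by simp
  have "(\<Prod>s\<in>{0..<n}. a s) * (\<Prod>s\<in>{n..<n+n}. a s) = (\<Prod>s\<in>{0..<n+n}. a s)"
    by (rule prod.atLeastLessThan_concat) auto
  then have "(\<Prod>s<n+n. a s) = (\<Prod>s<n. a s) * (\<Prod>s\<in>{n..<n+n}. a s)"
    by (simp add: lessThan_atLeast0)
  then have Pall: "(-1)^n * (\<Prod>s<n+n. a s) = t0^2" using P1 P2 by (simp add: power_add[symmetric])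
  have t0nz: "t0 \<noteq> 0"
  proof
    assume "t0 = 0"
    then have "(\<Prod>s<n+n. a s) = 0" using Pall by simp
    then show False using aE0 by simp
  qed
  interpret R: rs E E0 xi n a t0
    by (unfold_locales) (use sfE sfE0 E0E E0R xi n1 aE0 t0 t0nz Pall in auto)
  have H: "herm_matrix n d q \<delta> = diagm (n+n) a"
    unfolding herm_matrix_def diagm_def a_def by (simp add: mult_2)
  show ?thesis using R.main unfolding H mult_2 .
qed

end
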